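(* Let $S_N$ denote the $N$-th large Schröder number and $C_N=\frac{1}{N+1}\binom{2N}{N}$ the $N$-th Catalan number. For every non-negative integer $n$, $$v_3(S_{2n+1})=v_3(C_n),\qquad v_3(S_{2n+2})=1+v_3(2n+1)+v_3(C_n).$$
   Context: The large Schröder number $S_N$ is the number of lattice paths from $(0,0)$ to $(N,N)$ using steps $(1,0)$, $(0,1)$, $(1,1)$ that never go above the diagonal $y=x$ (so $S_0=1,S_1=2,S_2=6,\dots$). $v_3(y)$ denotes the $3$-adic valuation of a nonzero integer $y$. *)

theory Defs
  imports "HOL-Computational_Algebra.Computational_Algebra"
begin

datatype step = E | N | D

fun step_vec :: "step \<Rightarrow> int \<times> int" where
  "step_vec E = (1, 0)"
| "step_vec N = (0, 1)"
| "step_vec D = (1, 1)"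

definition endpoint :: "step list \<Rightarrow> int \<times> int" where
  "endpoint ps = (sum_list (map (fst \<circ> step_vec) ps), sum_list (map (snd \<circ> step_vec) ps))"

definition schroeder_paths :: "nat \<Rightarrow> step list set" where
  "schroeder_paths n = {ps. endpoint ps = (int n, int n) \<and>
      (\<forall>k \<le> length ps. snd (endpoint (take k ps)) \<le> fst (endpoint (take k ps)))}"

definition schroeder :: "nat \<Rightarrow> nat" where
  "schroeder n = card (schroeder_paths n)"

definition catalan :: "nat \<Rightarrow> nat" where
  "catalan n = (2 * n choose n) div (n + 1)"

definition v3 :: "nat \<Rightarrow> nat" where
  "v3 y = multiplicity (3::nat) y"

end

theory Submission
  imports Defs
begin


lemma "prime (3::nat)" by simp
fun dh :: "step \<Rightarrow> int" where "dh E = 1" | "dh N = -1" | "dh D = 0"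
fun xs3 :: "step \<Rightarrow> nat" where "xs3 E = 1" | "xs3 N = 0" | "xs3 D = 1"

definition ht :: "step list \<Rightarrow> int" where "ht ps = sum_list (map dh ps)"
definition xc :: "step list \<Rightarrow> nat" where "xc ps = sum_list (map xs3 ps)"

lemma ht_simps[simp]: "ht [] = 0" "ht (s # ps) = dh s + ht ps" "ht (p @ q) = ht p + ht q"
  by (auto simp: ht_def)
lemma xc_simps[simp]: "xc [] = 0" "xc (s # ps) = xs3 s + xc ps" "xc (p @ q) = xc p + xc q"
  by (auto simp: xc_def)

fun nn :: "int \<Rightarrow> step list \<Rightarrow> bool" where
  "nn h [] = (0 \<le> h)"
| "nn h (s # ps) = (0 \<le> h \<and> nn (h + dh s) ps)"

lemma endpoint_eq: "endpoint ps = (int (xc ps), int (xc ps) - ht ps)"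
proof (induction ps)
  case Nil then show ?case by (simp add: endpoint_def)
next
  case (Cons s ps)
  then show ?case by (cases s) (auto simp: endpoint_def)
qed

lemma nn_take: "nn h ps \<longleftrightarrow> (\<forall>k \<le> length ps. 0 \<le> h + ht (take k ps))"
proof (induction ps arbitrary: h)
  case Nil then show ?case by simp
next
  case (Cons s ps)
  show ?case
  proof
    assume a: "nn h (s # ps)"
    show "\<forall>k \<le> length (s # ps). 0 \<le> h + ht (take k (s # ps))"
    proof (intro allI impI)
      fix k assume "k \<le> length (s # ps)"
      then show "0 \<le> h + ht (take k (s # ps))"
        using a Cons.IH[of "h + dh s"] by (cases k) (auto simp: algebra_simps)
    qed
  next
    assume a: "\<forall>k \<le> length (s # ps). 0 \<le> h + ht (take k (s # ps))"
    have "0 \<le> h" using a[rule_format, of 0] by simp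
    moreover have "\<forall>k \<le> length ps. 0 \<le> (h + dh s) + ht (take k ps)"
    proof (intro allI impI)
      fix k assume "k \<le> length ps"
      then show "0 \<le> (h + dh s) + ht (take k ps)" using a[rule_format, of "Suc k"] by (simp add: algebra_simps)
    qed
    ultimately show "nn h (s # ps)" using Cons.IH by simp
  qed
qed

lemma nn_append: "nn h (p @ q) \<longleftrightarrow> nn h p \<and> nn (h + ht p) q"
  by (induction p arbitrary: h) (auto simp: algebra_simps elim: nn.elims)

lemma nn_nonneg: "nn h p \<Longrightarrow> 0 \<le> h"
  by (cases p) auto

lemma nn_mono: "nn h p \<Longrightarrow> h \<le> h' \<Longrightarrow> nn h' p"
  by (induction p arbitrary: h h') auto

definition P :: "nat \<Rightarrow> step list set" where
  "P n = {ps. xc ps = n \<and> ht ps = 0 \<and> nn 0 ps}"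

lemma schroeder_paths_eq: "schroeder_paths n = P n"
  unfolding schroeder_paths_def P_def
  by (auto simp: endpoint_eq nn_take)

lemma length_bound: "int (length ps) \<le> 2 * int (xc ps) - ht ps"
  apply (induction ps)
   apply simp
  subgoal for a ps by (cases a) auto
  done

lemma step_UNIV: "(UNIV :: step set) = {E, N, D}"
  by (auto intro: step.exhaust)

lemma finite_P: "finite (P n)"
proof -
  have "P n \<subseteq> {xs. set xs \<subseteq> UNIV \<and> length xs \<le> 2 * n}"
  proof
    fix ps assume "ps \<in> P n"
    then have "xc ps = n" "ht ps = 0" by (auto simp: P_def)
    with length_bound[of ps] show "ps \<in> {xs. set xs \<subseteq> UNIV \<and> length xs \<le> 2 * n}" by simp
  qed
  moreover have "finite {xs. set xs \<subseteq> (UNIV :: step set) \<and> length xs \<le> 2 * n}"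
    by (rule finite_lists_length_le) (simp add: step_UNIV)
  ultimately show ?thesis by (rule finite_subset)
qed

lemma P_0: "P 0 = {[]}"
proof -
  have "ps = []" if "ps \<in> P 0" for ps
    using that length_bound[of ps] by (auto simp: P_def)
  then show ?thesis by (auto simp: P_def)
qed

lemma split_first:
  "1 \<le> c \<Longrightarrow> nn c r \<Longrightarrow> c + ht r \<le> 0 \<Longrightarrow>
   \<exists>p q. r = p @ N # q \<and> nn (c - 1) p \<and> c + ht p = 1"
proof (induction r arbitrary: c)
  case Nil then show ?case by simp
next
  case (Cons s r)
  show ?case
  proof (cases "s = N \<and> c = 1")
    case True
    then show ?thesis by (intro exI[of _ "[]"] exI[of _ r]) auto
  next
    case False
    have c1: "1 \<le> c + dh s" using False Cons.prems by (cases s) auto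
    have "nn (c + dh s) r" using Cons.prems by simp
    moreover have "c + dh s + ht r \<le> 0" using Cons.prems by (simp add: algebra_simps)
    ultimately obtain p q where "r = p @ N # q" "nn (c + dh s - 1) p" "c + dh s + ht p = 1"
      using Cons.IH[OF c1] by blast
    then show ?thesis using Cons.prems
      by (intro exI[of _ "s # p"] exI[of _ q]) (auto simp: algebra_simps)
  qed
qed

lemma unique_split:
  "nn h p \<Longrightarrow> h + ht p = 0 \<Longrightarrow> nn h p' \<Longrightarrow> h + ht p' = 0 \<Longrightarrow> p @ N # q = p' @ N # q' \<Longrightarrow> p = p' \<and> q = q'"
proof (induction p arbitrary: h p')
  case Nil
  then show ?case
    by (cases p') (auto simp: nn_append dest: nn_nonneg)
next
  case (Cons s p)
  show ?case
  proof (cases p')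
    case Nil
    then show ?thesis using Cons.prems by (auto dest: nn_nonneg)
  next
    case (Cons s' p1)
    then show ?thesis using Cons.prems Cons.IH[of "h + dh s" p1] by (auto simp: algebra_simps)
  qed
qed

definition cons2 :: "step list \<times> step list \<Rightarrow> step list" where
  "cons2 pq = E # fst pq @ N # snd pq"

lemma P_Suc: "P (Suc n) = Cons D ` P n \<union> (\<Union>b\<in>{..n}. cons2 ` (P b \<times> P (n - b)))"
proof (intro equalityI subsetI)
  fix ps assume ps: "ps \<in> P (Suc n)"
  then have x: "xc ps = Suc n" and h: "ht ps = 0" and nn0: "nn 0 ps" by (auto simp: P_def)
  then obtain s r where sr: "ps = s # r" by (cases ps) auto
  show "ps \<in> Cons D ` P n \<union> (\<Union>b\<in>{..n}. cons2 ` (P b \<times> P (n - b)))"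
  proof (cases s)
    case D
    then show ?thesis using x h nn0 sr by (auto simp: P_def)
  next
    case N
    then show ?thesis using nn0 sr by (auto dest: nn_nonneg)
  next
    case E
    then have "nn 1 r" "1 + ht r \<le> 0" using nn0 h sr by auto
    then obtain p q where pq: "r = p @ N # q" "nn 0 p" "1 + ht p = 1"
      using split_first[of 1 r] by auto
    have hp: "ht p = 0" using pq by simp
    have "nn 1 (p @ N # q)" using \<open>nn 1 r\<close> pq by simp
    then have nq: "nn 0 q" using hp by (simp add: nn_append)
    have hq: "ht q = 0" using h sr E pq hp by simp
    have xpq: "xc p + xc q = n" using x sr E pq by simp
    have "p \<in> P (xc p)" "q \<in> P (n - xc p)" using pq hp nq hq xpq by (auto simp: P_def)
    moreover have "ps = cons2 (p, q)" using sr E pq by (simp add: cons2_def)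
    moreover have "xc p \<in> {..n}" using xpq by simp
    ultimately show ?thesis by blast
  qed
next
  fix ps assume "ps \<in> Cons D ` P n \<union> (\<Union>b\<in>{..n}. cons2 ` (P b \<times> P (n - b)))"
  then show "ps \<in> P (Suc n)"
  proof
    assume "ps \<in> Cons D ` P n" then show ?thesis by (auto simp: P_def)
  next
    assume "ps \<in> (\<Union>b\<in>{..n}. cons2 ` (P b \<times> P (n - b)))"
    then obtain b p q where b: "b \<le> n" "p \<in> P b" "q \<in> P (n - b)" "ps = cons2 (p, q)" by auto
    have "nn 1 p" using b(2) by (auto simp: P_def intro: nn_mono)
    then show ?thesis using b by (auto simp: P_def cons2_def nn_append)
  qed
qed

lemma cons2_inj: "p \<in> P b \<Longrightarrow> p' \<in> P b' \<Longrightarrow> cons2 (p, q) = cons2 (p', q') \<Longrightarrow> p = p' \<and> q = q'"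
  using unique_split[of 0 p p' q q'] by (auto simp: P_def cons2_def)

lemma card_P_Suc: "card (P (Suc n)) = card (P n) + (\<Sum>b\<le>n. card (P b) * card (P (n - b)))"
proof -
  have fin: "finite (cons2 ` (P b \<times> P (n - b)))" for b using finite_P by auto
  have inj: "inj_on cons2 (P b \<times> P (n - b))" for b
    by (auto simp: inj_on_def dest: cons2_inj)
  have disj: "cons2 ` (P b \<times> P (n - b)) \<inter> cons2 ` (P b' \<times> P (n - b')) = {}" if "b \<noteq> b'" for b b'
  proof -
    { fix p q p' q' assume "p \<in> P b" "p' \<in> P b'" "cons2 (p, q) = cons2 (p', q')"
      then have "p = p'" using cons2_inj by blast
      with \<open>p \<in> P b\<close> \<open>p' \<in> P b'\<close> have "b = b'" by (simp add: P_def) }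
    then show ?thesis using that by auto
  qed
  have d2: "Cons D ` P n \<inter> (\<Union>b\<in>{..n}. cons2 ` (P b \<times> P (n - b))) = {}"
    by (auto simp: cons2_def)
  have "card (P (Suc n)) = card (Cons D ` P n) + card (\<Union>b\<in>{..n}. cons2 ` (P b \<times> P (n - b)))"
    unfolding P_Suc by (rule card_Un_disjoint) (use finite_P fin d2 in auto)
  also have "card (Cons D ` P n) = card (P n)" by (rule card_image) auto
  also have "card (\<Union>b\<in>{..n}. cons2 ` (P b \<times> P (n - b))) = (\<Sum>b\<le>n. card (cons2 ` (P b \<times> P (n - b))))"
    by (rule card_UN_disjoint) (use fin disj in auto)
  also have "\<dots> = (\<Sum>b\<le>n. card (P b) * card (P (n - b)))"
    by (rule sum.cong) (auto simp: card_image[OF inj] card_cartesian_product)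
  finally show ?thesis .
qed



definition Fs :: "real fps" where "Fs = Abs_fps (\<lambda>n. real (schroeder n))"

lemma schroeder_card: "schroeder n = card (P n)"
  by (simp add: schroeder_def schroeder_paths_eq)

lemma Fs_eq: "Fs = 1 + fps_X * Fs + fps_X * Fs^2"
proof (rule fps_ext)
  fix n show "Fs $ n = (1 + fps_X * Fs + fps_X * Fs^2) $ n"
  proof (cases n)
    case 0 then show ?thesis by (simp add: Fs_def schroeder_card P_0)
  next
    case (Suc m)
    have "Fs $ n = real (card (P m)) + (\<Sum>b\<le>m. real (card (P b)) * real (card (P (m - b))))"
      using Suc by (simp add: Fs_def schroeder_card card_P_Suc)
    also have "\<dots> = Fs $ m + (Fs * Fs) $ m"
      by (simp add: Fs_def schroeder_card fps_mult_nth atLeast0AtMost)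
    also have "\<dots> = (1 + fps_X * Fs + fps_X * Fs^2) $ n"
      using Suc by (simp add: power2_eq_square)
    finally show ?thesis .
  qed
qed

definition A :: "real fps" where "A = Abs_fps (\<lambda>i. 3 ^ i)"

lemma A_inv: "(1 - 3 * fps_X) * A = 1"
proof (rule fps_ext)
  fix n show "((1 - 3 * fps_X) * A) $ n = (1::real fps) $ n"
  proof -
    have e: "(1 - 3 * fps_X) * A = A - fps_const 3 * (fps_X * A)" by (simp add: algebra_simps numeral_fps_const)
    show ?thesis unfolding e by (cases n) (simp_all add: A_def)
  qed
qed

lemma A_pow: "(A ^ Suc r) $ m = real ((r + m) choose m) * 3 ^ m"
proof (induction r arbitrary: m)
  case 0 then show ?case by (simp add: A_def)
next
  case (Suc r)
  have "(A ^ Suc (Suc r)) $ m = (A ^ Suc r * A) $ m" by (simp only: power_Suc2)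
  also have "\<dots> = (\<Sum>i=0..m. real ((r + i) choose i) * 3 ^ i * 3 ^ (m - i))"
    by (simp only: fps_mult_nth Suc.IH) (simp add: A_def)
  also have "\<dots> = (\<Sum>i=0..m. real ((r + i) choose i)) * 3 ^ m"
    by (simp add: sum_distrib_right mult.assoc power_add[symmetric])
  also have "(\<Sum>i=0..m. real ((r + i) choose i)) = real (Suc (r + m) choose m)"
    using sum_choose_lower[of r m] by (simp add: atLeast0AtMost flip: of_nat_sum)
  finally show ?case by simp
qed


lemma alg1: fixes x f :: "'a::comm_ring_1" assumes "f = 1 + x*f + x*f^2"
  shows "(1 - x - 2*x*f)^2 = 1 - 6*x + x^2"
proof -
  have e: "x*f^2 = f - 1 - x*f" using assms by (simp add: algebra_simps)
  have "(1 - x - 2*x*f)^2 = 1 - 2*x + x^2 - 4*x*f + 4*x*x*f + 4*x*(x*f^2)"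
    by (simp add: power2_eq_square algebra_simps)
  also have "\<dots> = 1 - 6*x + x^2" unfolding e by (simp add: algebra_simps)
  finally show ?thesis .
qed
lemma alg2: fixes x u q :: "'a::comm_ring_1" assumes "(1 - 3*x)*u = x" "q*q = 1 + (-8)*u^2"
  shows "((1 - 3*x)*q)^2 = 1 - 6*x + x^2"
proof -
  have "((1 - 3*x)*q)^2 = (1 - 3*x)^2 * (q*q)" by (simp add: power2_eq_square algebra_simps)
  also have "\<dots> = (1 - 3*x)^2 - 8 * ((1 - 3*x)*u)^2" unfolding assms(2) by (simp add: power2_eq_square algebra_simps)
  also have "\<dots> = 1 - 6*x + x^2" unfolding assms(1) by (simp add: power2_eq_square algebra_simps)
  finally show ?thesis .
qed
lemma alg3: fixes x u q g h F :: "'a::comm_ring_1" assumes "(1 - 3*x)*u = x" "q = 1 + g*h" "g = (-8)*u^2"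
   "1 - x - 2*x*F = (1 - 3*x)*q"
  shows "x * (2*F) = x * (2 + 8*u*h)"
proof -
  have "(1 - 3*x)*q = (1 - 3*x) - 8*((1 - 3*x)*u)*u*h" unfolding assms(2,3) by (simp add: power2_eq_square algebra_simps)
  also have "\<dots> = 1 - 3*x - 8*x*u*h" unfolding assms(1) by simp
  finally show ?thesis using assms(4) by (simp add: algebra_simps)
qed


definition u :: "real fps" where "u = fps_X * A"
definition G :: "real fps" where "G = (-8) * u^2"
definition H :: "real fps" where "H = Abs_fps (\<lambda>k. (1/2) gchoose (k+1))"
definition Bh :: "real fps" where "Bh = fps_binomial (1/2)"

lemma G0: "G $ 0 = 0" by (simp add: G_def u_def power2_eq_square neg_numeral_fps_const)

lemma Bh_sq: "Bh * Bh = 1 + fps_X"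
proof -
  have "fps_binomial (1/2 + 1/2) = Bh * Bh" unfolding Bh_def by (rule fps_binomial_add_mult)
  then show ?thesis by (simp add: fps_binomial_1)
qed

lemma Bh_H: "Bh = 1 + fps_X * H"
proof (rule fps_ext)
  fix n show "Bh $ n = (1 + fps_X * H) $ n"
    by (cases n) (simp_all add: Bh_def H_def)
qed

definition Q where "Q = Bh oo G"

lemma Q_sq: "Q * Q = 1 + G"
proof -
  have "Q * Q = (Bh * Bh) oo G" by (simp add: Q_def fps_compose_mult_distrib[OF G0])
  also have "\<dots> = 1 + G" by (simp add: Bh_sq fps_compose_add_distrib G0)
  finally show ?thesis .
qed

lemma Q_H: "Q = 1 + G * (H oo G)"
  by (simp add: Q_def Bh_H fps_compose_add_distrib fps_compose_mult_distrib[OF G0] G0)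

lemma u_eq: "(1 - 3 * fps_X) * u = fps_X"
  using A_inv by (simp add: u_def mult.left_commute)

lemma VR: "1 - fps_X - 2*fps_X*Fs = (1 - 3*fps_X) * Q"
proof -
  define V where "V = 1 - fps_X - 2*fps_X*Fs"
  define R where "R = (1 - 3*fps_X) * Q"
  have "V^2 = 1 - 6*fps_X + fps_X^2" unfolding V_def by (rule alg1[OF Fs_eq])
  moreover have "R^2 = 1 - 6*fps_X + fps_X^2" unfolding R_def
    by (rule alg2[OF u_eq]) (simp add: Q_sq G_def)
  ultimately have "V * V = R * R" by (simp add: power2_eq_square)
  moreover have "(V - R) * (V + R) = V * V - R * R" by (simp add: algebra_simps)
  ultimately have "(V - R) * (V + R) = 0" by simp
  moreover have "(V + R) $ 0 = 2" unfolding V_def R_def Q_def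
    by (simp add: fps_compose_nth Bh_def)
  moreover have "V + R \<noteq> 0"
  proof
    assume "V + R = 0"
    then have "(V + R) $ 0 = 0" by simp
    with \<open>(V + R) $ 0 = 2\<close> show False by simp
  qed
  ultimately have "V = R" by simp
  then show ?thesis by (simp add: V_def R_def)
qed

lemma Fs_H: "2 * Fs = 2 + 8 * u * (H oo G)"
proof -
  have "fps_X * (2 * Fs) = fps_X * (2 + 8 * u * (H oo G))"
    by (rule alg3[OF u_eq Q_H]) (simp_all add: G_def VR)
  then show ?thesis by simp
qed



lemma comp_mult_nth:
  fixes f h g :: "real fps" assumes g0: "g $ 0 = 0"
  shows "(f * (h oo g)) $ K = (\<Sum>i=0..K. h $ i * (f * g ^ i) $ K)"
proof -
  have "(f * (h oo g)) $ K = (\<Sum>m=0..K. f $ m * (\<Sum>i=0..K - m. h $ i * (g ^ i $ (K - m))))"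
    by (simp add: fps_mult_nth fps_compose_nth)
  also have "\<dots> = (\<Sum>m=0..K. f $ m * (\<Sum>i=0..K. h $ i * (g ^ i $ (K - m))))"
  proof (rule sum.cong[OF refl])
    fix m assume "m \<in> {0..K}"
    have "(\<Sum>i=0..K. h $ i * (g ^ i $ (K - m))) = (\<Sum>i=0..K - m. h $ i * (g ^ i $ (K - m)))"
    proof (rule sum.mono_neutral_right)
      show "\<forall>i\<in>{0..K} - {0..K - m}. h $ i * g ^ i $ (K - m) = 0"
        using startsby_zero_power_prefix[OF g0] by auto
    qed auto
    then show "f $ m * (\<Sum>i=0..K - m. h $ i * (g ^ i $ (K - m))) = f $ m * (\<Sum>i=0..K. h $ i * (g ^ i $ (K - m)))"
      by simp
  qed
  also have "\<dots> = (\<Sum>m=0..K. \<Sum>i=0..K. h $ i * (f $ m * (g ^ i $ (K - m))))"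
    by (simp add: sum_distrib_left algebra_simps)
  also have "\<dots> = (\<Sum>i=0..K. \<Sum>m=0..K. h $ i * (f $ m * (g ^ i $ (K - m))))"
    by (rule sum.swap)
  also have "\<dots> = (\<Sum>i=0..K. h $ i * (f * g ^ i) $ K)"
    by (simp add: fps_mult_nth sum_distrib_left)
  finally show ?thesis .
qed

lemma uG_pow: "u * G ^ i = fps_const ((-8) ^ i) * (fps_X ^ (2*i+1) * A ^ (2*i+1))"
proof -
  have g: "G ^ i = fps_const ((-8) ^ i) * (u^2)^i"
    by (simp add: G_def power_mult_distrib neg_numeral_fps_const fps_const_power)
  have "(u^2)^i = u^(2*i)" by (simp add: power_mult)
  then have "u * G ^ i = fps_const ((-8) ^ i) * u ^ (2*i+1)"
    by (simp add: g algebra_simps)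
  also have "u ^ (2*i+1) = fps_X ^ (2*i+1) * A ^ (2*i+1)" by (simp only: u_def power_mult_distrib)
  finally show ?thesis .
qed

lemma uG_nth: "(u * G ^ i) $ K = (if K < 2*i+1 then 0 else (-8) ^ i * real ((K - 1) choose (2*i)) * 3 ^ (K - 1 - 2*i))"
proof (cases "K < 2*i+1")
  case True then show ?thesis by (simp only: uG_pow fps_mult_left_const_nth fps_X_power_mult_nth) simp
next
  case False
  then have "(u * G ^ i) $ K = (-8) ^ i * (A ^ Suc (2*i)) $ (K - (2*i+1))"
    by (simp only: uG_pow fps_mult_left_const_nth fps_X_power_mult_nth) simp
  also have "\<dots> = (-8) ^ i * real ((K - 1) choose (2*i)) * 3 ^ (K - 1 - 2*i)"
  proof -
    have a: "(A ^ Suc (2*i)) $ (K - (2*i+1)) = real ((2*i + (K - (2*i+1))) choose (K - (2*i+1))) * 3^(K-(2*i+1))"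
      by (rule A_pow)
    have b: "K - (2*i+1) = K - 1 - 2*i" "2*i + (K - 1 - 2*i) = K - 1" using False by auto
    have c: "(K - 1) choose (K - 1 - 2*i) = (K - 1) choose (2*i)"
      using False by (subst binomial_symmetric[of "2*i" "K-1"]) auto
    show ?thesis using a unfolding b c by (simp add: mult.assoc)
  qed
  finally show ?thesis using False by simp
qed

lemma schroeder_H: assumes "1 \<le> K"
  shows "real (schroeder K) = (\<Sum>i=0..K. (if K < 2*i+1 then 0 else
     4 * H $ i * (-8) ^ i * real ((K - 1) choose (2*i)) * 3 ^ (K - 1 - 2*i)))"
proof -
  have "(2 * Fs) $ K = (2 + 8 * u * (H oo G)) $ K" by (simp only: Fs_H)
  then have "2 * real (schroeder K) = 8 * (u * (H oo G)) $ K"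
    using assms by (simp add: numeral_fps_const Fs_def mult.assoc)
  then have "real (schroeder K) = 4 * (u * (H oo G)) $ K" by simp
  also have "\<dots> = 4 * (\<Sum>i=0..K. H $ i * (u * G ^ i) $ K)" by (simp add: comp_mult_nth[OF G0])
  also have "\<dots> = (\<Sum>i=0..K. (if K < 2*i+1 then 0 else
     4 * H $ i * (-8) ^ i * real ((K - 1) choose (2*i)) * 3 ^ (K - 1 - 2*i)))"
    by (simp add: uG_nth sum_distrib_left algebra_simps if_distrib cong: if_cong)
  finally show ?thesis .
qed



lemma central_step: "(i+1) * ((2*i+2) choose (i+1)) = 2*(2*i+1) * ((2*i) choose i)"
proof -
  have a: "(i+1) * ((2*i+2) choose (i+1)) = (2*i+2) * ((2*i+1) choose i)"
    using Suc_times_binomial[of i "2*i+1"] by simp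
  have b: "(i+1) * ((2*i+1) choose (i+1)) = (2*i+1) * ((2*i) choose i)"
    using Suc_times_binomial[of i "2*i"] by simp
  have c: "(2*i+1) choose i = (2*i+1) choose (i+1)"
    using binomial_symmetric[of i "2*i+1"] by (simp add: numeral_2_eq_2)
  have "(i+1) * ((i+1) * ((2*i+2) choose (i+1))) = (i+1) * (2*(2*i+1) * ((2*i) choose i))"
  proof -
    have "(i+1) * ((i+1) * ((2*i+2) choose (i+1))) = (2*i+2) * ((i+1) * ((2*i+1) choose (i+1)))"
      unfolding a c by (simp add: algebra_simps)
    also have "\<dots> = (i+1) * (2*(2*i+1) * ((2*i) choose i))" unfolding b by (simp add: algebra_simps)
    finally show ?thesis .
  qed
  moreover have nz: "(i+1::nat) \<noteq> 0" by simp
  ultimately show ?thesis by (metis mult_left_cancel)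
qed

lemma cat_mult: "catalan n * (n+1) = (2*n) choose n"
proof -
  have p: "(2*n+1) choose (n+1) = ((2*n) choose n) + ((2*n) choose (n+1))" by simp
  have s: "(n+1) * ((2*n+1) choose (n+1)) = (2*n+1) * ((2*n) choose n)"
    using Suc_times_binomial[of n "2*n"] by simp
  have e: "(n+1) * ((2*n) choose (n+1)) = n * ((2*n) choose n)"
    using s unfolding p by (simp add: algebra_simps)
  have "(n+1) * (((2*n) choose n) - ((2*n) choose (n+1))) = (n+1) * ((2*n) choose n) - (n+1) * ((2*n) choose (n+1))"
    by (rule diff_mult_distrib2)
  also have "\<dots> = (n+1) * ((2*n) choose n) - n * ((2*n) choose n)" by (simp only: e)
  also have "\<dots> = (2*n) choose n" by simp
  finally have "(n+1) dvd ((2*n) choose n)" by (metis dvd_triv_left)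
  then show ?thesis unfolding catalan_def by (metis dvd_div_mult_self)
qed

lemma real_catalan: "real (catalan n) = real ((2*n) choose n) / real (n+1)"
proof -
  have "real (catalan n) * real (n+1) = real ((2*n) choose n)"
    using cat_mult[of n] by (metis of_nat_mult)
  then show ?thesis by (simp add: field_simps)
qed



lemma H_cat0: "4 * ((1/2::real) gchoose (i+1)) * (-8)^i * real (i+1) = 2^(i+1) * real ((2*i) choose i)"
proof (induction i)
  case 0 then show ?case by (simp add: gbinomial_Suc)
next
  case (Suc i)
  define g where "g j = ((1/2::real) gchoose (j+1))" for j
  define c where "c = real ((2*i) choose i)"
  have m: "(1/2) * g i = real (i+1) * g i + real (i+2) * g (Suc i)"
    using gbinomial_mult_1[of "1/2::real" "i+1"] by (simp add: g_def)
  have IH: "4 * g i * (-8)^i * real (i+1) = 2^(i+1) * c"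
    using Suc.IH by (simp add: g_def c_def)
  have cs0: "real ((i+1) * ((2*i+2) choose (i+1))) = real (2*(2*i+1) * ((2*i) choose i))"
    by (simp only: central_step)
  define b2 where "b2 = real ((2*Suc i) choose (Suc i))"
  have cs: "real (i+1) * b2 = 2*(2*real i+1) * c"
    using cs0 unfolding c_def b2_def of_nat_mult by simp
  have m2: "real (i+2) * g (Suc i) = ((1/2) - real (i+1)) * g i" using m by (simp add: algebra_simps)
  have "real (i+1) * (4 * g (Suc i) * (-8)^(Suc i) * real (Suc i + 1))
      = 4 * (-8)^(Suc i) * real (i+1) * (real (i+2) * g (Suc i))" by (simp add: algebra_simps)
  also have "\<dots> = 4 * (-8)^(Suc i) * real (i+1) * (((1/2) - real (i+1)) * g i)"
    by (simp only: m2)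
  also have "\<dots> = 4 * (2 * real i + 1) * (4 * g i * (-8)^i * real (i+1))"
    by (simp add: algebra_simps)
  also have "\<dots> = 4 * (2 * real i + 1) * (2^(i+1) * c)" by (simp only: IH)
  also have "\<dots> = 2^(Suc i + 1) * (2*(2*real i+1) * c)"
    by (simp add: algebra_simps)
  also have "\<dots> = real (i+1) * (2^(Suc i + 1) * b2)"
    unfolding cs[symmetric] by (simp only: mult_ac)
  finally have "real (i+1) * (4 * g (Suc i) * (-8)^(Suc i) * real (Suc i + 1))
      = real (i+1) * (2^(Suc i + 1) * b2)" .
  then have "4 * g (Suc i) * (-8)^(Suc i) * real (Suc i + 1) = 2^(Suc i + 1) * b2"
    by (metis mult_left_cancel of_nat_eq_0_iff add_is_0 one_neq_zero)
  then show ?case by (simp only: g_def b2_def)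
qed

lemma H_cat: "4 * H $ i * (-8)^i = 2^(i+1) * real (catalan i)"
proof -
  have "4 * H $ i * (-8)^i * real (i+1) = 2^(i+1) * real ((2*i) choose i)"
    using H_cat0[of i] by (simp add: H_def)
  then show ?thesis unfolding real_catalan by (simp add: field_simps del: of_nat_Suc)
qed

lemma schroeder_nat: assumes r: "r \<le> 1"
  shows "schroeder (2*n+1+r) = (\<Sum>i\<le>n. 2^(i+1) * catalan i * ((2*n+r) choose (2*i)) * 3^(2*n+r-2*i))"
proof -
  define K where "K = 2*n+1+r"
  have iff: "K < 2*i+1 \<longleftrightarrow> n < i" for i using r unfolding K_def by auto
  have "real (schroeder K) = (\<Sum>i=0..K. (if K < 2*i+1 then 0 else
     4 * H $ i * (-8) ^ i * real ((K - 1) choose (2*i)) * 3 ^ (K - 1 - 2*i)))"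
    by (rule schroeder_H) (simp add: K_def)
  also have "\<dots> = (\<Sum>i\<in>{..n}. (if K < 2*i+1 then 0 else
     4 * H $ i * (-8) ^ i * real ((K - 1) choose (2*i)) * 3 ^ (K - 1 - 2*i)))"
    by (rule sum.mono_neutral_right) (use r in \<open>auto simp: iff K_def\<close>)
  also have "\<dots> = (\<Sum>i\<le>n. real (2^(i+1) * catalan i * ((2*n+r) choose (2*i)) * 3^(2*n+r-2*i)))"
  proof (rule sum.cong[OF refl])
    fix i assume "i \<in> {..n}"
    then have "\<not> K < 2*i+1" using iff by auto
    moreover have "K - 1 = 2*n+r" by (simp add: K_def)
    ultimately show "(if K < 2*i+1 then 0 else
     4 * H $ i * (-8) ^ i * real ((K - 1) choose (2*i)) * 3 ^ (K - 1 - 2*i)) =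
       real (2^(i+1) * catalan i * ((2*n+r) choose (2*i)) * 3^(2*n+r-2*i))"
      by (simp only: if_False H_cat of_nat_mult of_nat_power) simp
  qed
  also have "\<dots> = real (\<Sum>i\<le>n. 2^(i+1) * catalan i * ((2*n+r) choose (2*i)) * 3^(2*n+r-2*i))"
    by (simp only: of_nat_sum)
  finally show ?thesis unfolding K_def of_nat_eq_iff .
qed



lemma p3: "prime_elem (3::nat)" by simp

lemma v3_mult: "a \<noteq> 0 \<Longrightarrow> b \<noteq> 0 \<Longrightarrow> v3 (a * b) = v3 a + v3 b"
  unfolding v3_def by (rule prime_elem_multiplicity_mult_distrib[OF p3])

lemma v3_pow3: "v3 (3 ^ k) = k"
  unfolding v3_def by (rule multiplicity_same_power) auto

lemma v3_pow2: "v3 (2 ^ k) = 0"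
proof -
  have "\<not> (3::nat) dvd 2 ^ k"
  proof
    assume "(3::nat) dvd 2 ^ k"
    then have "(3::nat) dvd 2" using prime_dvd_power[of "3::nat" 2 k] by simp
    then show False by simp
  qed
  then show ?thesis unfolding v3_def by (rule not_dvd_imp_multiplicity_0)
qed

lemma v3_le: "a \<noteq> 0 \<Longrightarrow> 3 ^ v3 a \<le> a"
  unfolding v3_def by (rule dvd_imp_le[OF multiplicity_dvd]) simp

lemma v3_lt: assumes "a \<noteq> 0" "a < 9 ^ j" shows "v3 a < 2 * j"
proof -
  have "(3::nat) ^ v3 a < 3 ^ (2 * j)" using v3_le[OF assms(1)] assms(2) by (simp add: power_mult)
  then show ?thesis by (rule power_less_imp_less_exp[rotated]) simp
qed

lemma v3_dvd: "k \<le> v3 b \<Longrightarrow> 3 ^ k dvd b"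
  unfolding v3_def by (rule multiplicity_dvd')

lemma v3_add: assumes "a \<noteq> 0" "3 ^ (v3 a + 1) dvd b" shows "v3 (a + b) = v3 a"
  unfolding v3_def
proof (rule multiplicity_eqI)
  have "3 ^ v3 a dvd a" by (rule v3_dvd) simp
  moreover have "3 ^ v3 a dvd b" using assms(2) by (rule dvd_trans[rotated]) (simp add: le_imp_power_dvd)
  ultimately show "3 ^ multiplicity 3 a dvd a + b" unfolding v3_def by simp
  show "\<not> 3 ^ Suc (multiplicity 3 a) dvd a + b"
  proof
    assume "3 ^ Suc (multiplicity 3 a) dvd a + b"
    then have "3 ^ Suc (multiplicity 3 a) dvd a" using assms(2) unfolding v3_def
      by (simp add: dvd_add_left_iff)
    then have "Suc (multiplicity 3 a) \<le> multiplicity 3 a"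
      using assms(1) by (intro multiplicity_geI) auto
    then show False by simp
  qed
qed

lemma aux_le: "(j+1)*x = 2*(2*j+1)*y \<Longrightarrow> x \<le> 4*(y::nat)"
proof -
  assume h: "(j+1)*x = 2*(2*j+1)*y"
  have "(j+1)*(4*y) = 2*(2*j+1)*y + 2*y" by (simp add: algebra_simps)
  then have "(j+1)*x \<le> (j+1)*(4*y)" using h by simp
  then show ?thesis by (subst (asm) mult_le_cancel1) simp
qed

lemma central_le: "((2*j+2) choose (j+1)) \<le> 4 * ((2*j) choose j)"
  by (rule aux_le[OF central_step])

lemma aux_bound: assumes "1 \<le> j" "x \<le> 4*y" "(2*j+1)*y < 9^j"
  shows "(2*j+3)*(x::nat) < 9*9^j"
proof -
  have "(2*j+3)*x \<le> (2*j+3)*(4*y)" using assms(2) by simp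
  also have "\<dots> \<le> 9*((2*j+1)*y)"
  proof -
    have "(2*j+3)*4 \<le> 9*(2*j+1)" using assms(1) by simp
    then have "(2*j+3)*4*y \<le> 9*(2*j+1)*y" by (rule mult_right_mono) simp
    then show ?thesis by (simp only: mult.assoc)
  qed
  also have "\<dots> < 9*9^j" using assms(3) by simp
  finally show ?thesis .
qed

lemma central_bound: "1 \<le> j \<Longrightarrow> (2*j+1) * ((2*j) choose j) < 9 ^ j"
proof (induction j rule: dec_induct)
  case base then show ?case by (simp add: numeral_2_eq_2)
next
  case (step j)
  have "(2*j+3) * ((2*j+2) choose (j+1)) < 9*9^j"
    by (rule aux_bound[OF step(1) central_le step(3)])
  moreover have "2*Suc j+1 = 2*j+3" "2*Suc j = 2*j+2" "Suc j = j+1" "(9::nat)^(j+1) = 9*9^j" by simp_all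
  ultimately show ?case by (simp only:)
qed

lemma cat_pos: "catalan n \<noteq> 0"
  using cat_mult[of n] by (metis mult_0 binomial_eq_0_iff not_le le_add2 mult_2 )

lemma bin_id_real:
  "real ((2*k+2*j) choose (2*k)) * real (catalan k) * real ((2*j) choose j)
   = real (catalan (k+j)) * real ((k+j) choose k) * real ((k+j+1) choose (k+1))"
proof -
  have b1: "real ((2*k+2*j) choose (2*k)) = fact (2*k+2*j) / (fact (2*k) * fact (2*j))"
    using binomial_fact[of "2*k" "2*k+2*j", where 'a=real] by simp
  have b2: "real ((2*j) choose j) = fact (2*j) / (fact j * fact j)"
    using binomial_fact[of j "2*j", where 'a=real] by (simp add: mult_2)
  have b3: "real ((k+j) choose k) = fact (k+j) / (fact k * fact j)"
    using binomial_fact[of k "k+j", where 'a=real] by simp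
  have b4: "real ((k+j+1) choose (k+1)) = fact (k+j+1) / (fact (k+1) * fact j)"
    using binomial_fact[of "k+1" "k+j+1", where 'a=real] by simp
  have c1: "real (catalan k) = fact (2*k) / (fact k * fact k) / real (k+1)"
    unfolding real_catalan using binomial_fact[of k "2*k", where 'a=real] by (simp add: mult_2)
  have c2: "real (catalan (k+j)) = fact (2*k+2*j) / (fact (k+j) * fact (k+j)) / real (k+j+1)"
    unfolding real_catalan using binomial_fact[of "k+j" "2*(k+j)", where 'a=real]
    by (simp add: mult_2 algebra_simps)
  have f1: "fact (k+1) = real (k+1) * fact k" by (simp add: fact_Suc)
  have f2: "fact (k+j+1) = real (k+j+1) * fact (k+j)" by (simp add: fact_Suc)
  have nz: "fact k \<noteq> (0::real)" "fact j \<noteq> (0::real)" "fact (k+j) \<noteq> (0::real)"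
     "fact (2*k) \<noteq> (0::real)" "fact (2*j) \<noteq> (0::real)" by simp_all
  show ?thesis unfolding b1 b2 b3 b4 c1 c2 f1 f2
    using nz by (simp add: field_simps del: of_nat_add of_nat_Suc)
qed

lemma bin_id:
  "((2*k+2*j) choose (2*k)) * catalan k * ((2*j) choose j)
   = catalan (k+j) * ((k+j) choose k) * ((k+j+1) choose (k+1))"
  using bin_id_real[of k j] unfolding of_nat_mult[symmetric] of_nat_eq_iff .



lemma v3_2: "v3 2 = 0" using v3_pow2[of 1] by simp
lemma v3_3: "v3 3 = 1" using v3_pow3[of 1] by simp
lemma v3_6: "v3 6 = 1" using v3_mult[of 2 3] v3_2 v3_3 by simp

lemma term0: assumes "i < n"
  shows "v3 (catalan n) + 1 \<le> v3 (2^(i+1) * catalan i * ((2*n) choose (2*i)) * 3^(2*n+0-2*i))"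
proof -
  define j where "j = n - i"
  have nj: "n = i + j" "1 \<le> j" using assms unfolding j_def by arith+
  define B where "B = (2*j) choose j"
  have Bnz: "B \<noteq> 0" by (simp add: B_def)
  have "B \<le> (2*j+1)*B" by simp
  then have B9: "B < 9^j" using central_bound[OF nj(2)] unfolding B_def[symmetric]
    by (rule le_less_trans)
  have vB: "v3 B < 2*j" by (rule v3_lt[OF Bnz B9])
  have nz1: "(2*i+2*j) choose (2*i) \<noteq> 0" by simp
  have nz2: "(i+j) choose i \<noteq> 0" "(i+j+1) choose (i+1) \<noteq> 0" by simp_all
  have id: "((2*i+2*j) choose (2*i)) * catalan i * B = catalan (i+j) * ((i+j) choose i) * ((i+j+1) choose (i+1))"
    unfolding B_def by (rule bin_id)
  have "v3 (((2*i+2*j) choose (2*i)) * catalan i * B) = v3 ((2*i+2*j) choose (2*i)) + v3 (catalan i) + v3 B"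
    using nz1 Bnz cat_pos by (simp add: v3_mult)
  moreover have "v3 (catalan (i+j) * ((i+j) choose i) * ((i+j+1) choose (i+1))) \<ge> v3 (catalan (i+j))"
    using nz2 cat_pos by (simp add: v3_mult)
  ultimately have ge: "v3 ((2*i+2*j) choose (2*i)) + v3 (catalan i) + v3 B \<ge> v3 (catalan n)"
    using id nj(1) by simp
  have "v3 (2^(i+1) * catalan i * ((2*n) choose (2*i)) * 3^(2*n+0-2*i))
     = v3 (catalan i) + v3 ((2*i+2*j) choose (2*i)) + 2*j"
    using nz1 cat_pos nj(1) by (simp add: v3_mult v3_pow2 v3_pow3 v3_2 v3_3 v3_6 algebra_simps)
  then show ?thesis using ge vB by linarith
qed

lemma term1: assumes "i < n"
  shows "v3 (catalan n) + v3 (2*n+1) + 1 + 1 \<le> v3 (2^(i+1) * catalan i * ((2*n+1) choose (2*i)) * 3^(2*n+1-2*i))"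
proof -
  define j where "j = n - i"
  have nj: "n = i + j" "1 \<le> j" using assms unfolding j_def by arith+
  define B where "B = (2*j) choose j"
  have Bnz: "B \<noteq> 0" by (simp add: B_def)
  have B9: "(2*j+1)*B < 9^j" using central_bound[OF nj(2)] unfolding B_def .
  have vB: "v3 ((2*j+1)*B) < 2*j" by (rule v3_lt[OF _ B9]) (simp add: Bnz)
  have nz1: "(2*i+2*j) choose (2*i) \<noteq> 0" "(2*i+2*j+1) choose (2*i) \<noteq> 0" by simp_all
  have nz2: "(i+j) choose i \<noteq> 0" "(i+j+1) choose (i+1) \<noteq> 0" by simp_all
  have id: "((2*i+2*j) choose (2*i)) * catalan i * B = catalan (i+j) * ((i+j) choose i) * ((i+j+1) choose (i+1))"
    unfolding B_def by (rule bin_id)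
  have ab: "(2*j+1) * ((2*i+2*j+1) choose (2*i)) = (2*i+2*j+1) * ((2*i+2*j) choose (2*i))"
    using binomial_absorb_comp[of "2*i+2*j+1" "2*i"] by simp
  have "((2*j+1)*B) * ((2*i+2*j+1) choose (2*i)) * catalan i
      = (2*i+2*j+1) * (((2*i+2*j) choose (2*i)) * catalan i * B)"
    by (metis ab mult.commute mult.left_commute)
  also have "\<dots> = (2*i+2*j+1) * (catalan (i+j) * ((i+j) choose i) * ((i+j+1) choose (i+1)))"
    by (simp only: id)
  finally have id2: "((2*j+1)*B) * ((2*i+2*j+1) choose (2*i)) * catalan i
      = (2*i+2*j+1) * (catalan (i+j) * ((i+j) choose i) * ((i+j+1) choose (i+1)))" .
  have "v3 (((2*j+1)*B) * ((2*i+2*j+1) choose (2*i)) * catalan i) = v3 ((2*j+1)*B) + v3 ((2*i+2*j+1) choose (2*i)) + v3 (catalan i)"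
    using nz1 Bnz cat_pos by (simp add: v3_mult del: mult_Suc mult_Suc_right)
  moreover have "v3 ((2*i+2*j+1) * (catalan (i+j) * ((i+j) choose i) * ((i+j+1) choose (i+1)))) \<ge> v3 (2*i+2*j+1) + v3 (catalan (i+j))"
    using nz2 cat_pos by (simp add: v3_mult del: mult_Suc mult_Suc_right)
  ultimately have ge: "v3 ((2*j+1)*B) + v3 ((2*i+2*j+1) choose (2*i)) + v3 (catalan i) \<ge> v3 (2*n+1) + v3 (catalan n)"
    using id2 nj(1) by (simp add: algebra_simps)
  have "v3 (2^(i+1) * catalan i * ((2*n+1) choose (2*i)) * 3^(2*n+1-2*i))
     = v3 (catalan i) + v3 ((2*i+2*j+1) choose (2*i)) + (2*j+1)"
    using nz1 cat_pos nj(1) by (simp add: v3_mult v3_pow2 v3_pow3 v3_2 v3_3 v3_6 algebra_simps)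
  then show ?thesis using ge vB by linarith
qed

theorem theorem6:
  fixes n :: nat
  shows "v3 (schroeder (2 * n + 1)) = v3 (catalan n)
    \<and> v3 (schroeder (2 * n + 2)) = 1 + v3 (2 * n + 1) + v3 (catalan n)"
proof
  define t where "t i = 2^(i+1) * catalan i * ((2*n+0) choose (2*i)) * 3^(2*n+0-2*i)" for i
  have "schroeder (2*n+1) = (\<Sum>i\<le>n. t i)" using schroeder_nat[of 0 n] by (simp add: t_def)
  also have "\<dots> = t n + (\<Sum>i<n. t i)" by (simp add: lessThan_Suc_atMost[symmetric])
  finally have s: "schroeder (2*n+1) = t n + (\<Sum>i<n. t i)" .
  have tn: "t n = 2^(n+1) * catalan n" by (simp add: t_def)
  have vtn: "v3 (t n) = v3 (catalan n)" using cat_pos by (simp add: tn v3_mult v3_pow2 v3_2)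
  have "3 ^ (v3 (t n) + 1) dvd (\<Sum>i<n. t i)"
  proof (rule dvd_sum)
    fix i assume "i \<in> {..<n}"
    then show "3 ^ (v3 (t n) + 1) dvd t i" unfolding vtn using term0[of i n]
      by (intro v3_dvd) (simp add: t_def)
  qed
  then show "v3 (schroeder (2 * n + 1)) = v3 (catalan n)"
    unfolding s using v3_add[of "t n"] vtn cat_pos by (simp add: tn)
next
  define t where "t i = 2^(i+1) * catalan i * ((2*n+1) choose (2*i)) * 3^(2*n+1-2*i)" for i
  have "schroeder (2*n+1+1) = (\<Sum>i\<le>n. t i)" using schroeder_nat[of 1 n] by (simp add: t_def)
  also have "\<dots> = t n + (\<Sum>i<n. t i)" by (simp add: lessThan_Suc_atMost[symmetric])
  finally have s: "schroeder (2*n+2) = t n + (\<Sum>i<n. t i)" by simp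
  have tn: "t n = 2^(n+1) * catalan n * (2*n+1) * 3" by (simp add: t_def)
  have vtn: "v3 (t n) = v3 (catalan n) + v3 (2*n+1) + 1" using cat_pos
    by (simp add: tn v3_mult v3_pow2 v3_2 v3_3 v3_6 del: mult_Suc mult_Suc_right)
  have "3 ^ (v3 (t n) + 1) dvd (\<Sum>i<n. t i)"
  proof (rule dvd_sum)
    fix i assume "i \<in> {..<n}"
    then show "3 ^ (v3 (t n) + 1) dvd t i" unfolding vtn using term1[of i n]
      by (intro v3_dvd) (simp add: t_def)
  qed
  then have "v3 (schroeder (2 * n + 2)) = v3 (t n)"
    unfolding s using v3_add[of "t n"] cat_pos by (simp add: tn)
  then show "v3 (schroeder (2 * n + 2)) = 1 + v3 (2 * n + 1) + v3 (catalan n)" using vtn by simp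
qed

end
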